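(* Let $G$ be a graph and let $H = K_1 + G$ be the join of a single new node with $G$. If $H$ is an eulerian graph whose number of edges $q$ satisfies $q \equiv 1$ or $2 \pmod 4$, then $G$ is non-supergraceful.
   Context: Graphs are finite, simple. An eulerian graph is a connected graph all of whose nodes have even degree. For a graph $G$ with $p$ nodes and $q$ edges, a total labeling is a map $\varphi: V(G) \to \{1,\dots,p+q\}$ such that the $p$ node labels and the $q$ edge labels $|\varphi(u)-\varphi(v)|$, $uv \in E(G)$, are all pairwise distinct, so that together they form exactly $\{1,\dots,p+q\}$. $G$ is supergraceful if it admits a total labeling, and non-supergraceful otherwise. *)

theory Defs
  imports Main
begin

definition simple_graph :: "'a set \<Rightarrow> 'a set set \<Rightarrow> bool" where
  "simple_graph V E \<longleftrightarrow> finite V \<and> (\<forall>e\<in>E. \<exists>u v. u \<in> V \<and> v \<in> V \<and> u \<noteq> v \<and> e = {u, v})"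

definition adjacent :: "'a set set \<Rightarrow> 'a \<Rightarrow> 'a \<Rightarrow> bool" where
  "adjacent E u v \<longleftrightarrow> {u, v} \<in> E"

definition connected_graph :: "'a set \<Rightarrow> 'a set set \<Rightarrow> bool" where
  "connected_graph V E \<longleftrightarrow> V \<noteq> {} \<and> (\<forall>u\<in>V. \<forall>v\<in>V. (adjacent E)\<^sup>*\<^sup>* u v)"

definition degree :: "'a set set \<Rightarrow> 'a \<Rightarrow> nat" where
  "degree E v = card {e \<in> E. v \<in> e}"

definition eulerian :: "'a set \<Rightarrow> 'a set set \<Rightarrow> bool" where
  "eulerian V E \<longleftrightarrow> simple_graph V E \<and> connected_graph V E \<and> (\<forall>v\<in>V. even (degree E v))"

text \<open>Join \<open>K_1 + G\<close>: new node \<open>None\<close>, old nodes \<open>Some v\<close>; the new node is adjacent to every old node.\<close>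
definition join_K1_nodes :: "'a set \<Rightarrow> 'a option set" where
  "join_K1_nodes V = insert None (Some ` V)"

definition join_K1_edges :: "'a set \<Rightarrow> 'a set set \<Rightarrow> 'a option set set" where
  "join_K1_edges V E = ((\<lambda>e. Some ` e) ` E) \<union> {{None, Some v} | v. v \<in> V}"

text \<open>Label of the edge \<open>{u,v}\<close> induced by a node labeling: \<open>|\<phi> u - \<phi> v|\<close>
  (for a 2-element edge this is max minus min of the two end labels).\<close>
definition edge_label :: "('a \<Rightarrow> int) \<Rightarrow> 'a set \<Rightarrow> int" where
  "edge_label \<phi> e = Max (\<phi> ` e) - Min (\<phi> ` e)"

definition total_labeling :: "'a set \<Rightarrow> 'a set set \<Rightarrow> ('a \<Rightarrow> int) \<Rightarrow> bool" where
  "total_labeling V E \<phi> \<longleftrightarrow>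
     inj_on \<phi> V \<and> inj_on (edge_label \<phi>) E \<and>
     \<phi> ` V \<inter> edge_label \<phi> ` E = {} \<and>
     \<phi> ` V \<union> edge_label \<phi> ` E = {1 .. int (card V + card E)}"

definition supergraceful :: "'a set \<Rightarrow> 'a set set \<Rightarrow> bool" where
  "supergraceful V E \<longleftrightarrow> (\<exists>\<phi>. total_labeling V E \<phi>)"

lemma edge_label_pair:
  assumes "u \<noteq> v" "inj_on \<phi> {u, v}"
  shows "edge_label \<phi> {u, v} = \<bar>\<phi> u - \<phi> v\<bar>"
  using assms by (auto simp: edge_label_def max_def min_def)

end

theory Submission
  imports Defs
begin

lemma fin_E:
  assumes "simple_graph V E" shows "finite E" "\<And>e. e \<in> E \<Longrightarrow> e \<subseteq> V" "\<And>e. e \<in> E \<Longrightarrow> finite e"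
proof -
  have V: "finite V" using assms by (simp add: simple_graph_def)
  have sub: "e \<subseteq> V" if eE: "e \<in> E" for e
  proof -
    obtain u v where "u \<in> V" "v \<in> V" "e = {u, v}" using assms eE unfolding simple_graph_def by meson
    then show ?thesis by simp
  qed
  then show "\<And>e. e \<in> E \<Longrightarrow> e \<subseteq> V" by simp
  have "E \<subseteq> Pow V" using sub by auto
  then show "finite E" using V by (simp add: finite_subset)
  show "\<And>e. e \<in> E \<Longrightarrow> finite e" using sub V by (meson finite_subset)
qed

lemma card_join:
  assumes "simple_graph V E"
  shows "card (join_K1_edges V E) = card E + card V"
proof -
  have V: "finite V" using assms by (simp add: simple_graph_def)
  have E: "finite E" using fin_E[OF assms] by simp
  have eq: "{{None, Some v} | v. v \<in> V} = (\<lambda>v. {None, Some v}) ` V" by blast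
  have i1: "inj_on (\<lambda>e. Some ` e) E" by (simp add: inj_on_def inj_image_eq_iff)
  have i2: "inj_on (\<lambda>v. {None, Some v}) V" by (auto simp: inj_on_def doubleton_eq_iff)
  have disj: "((\<lambda>e. Some ` e) ` E) \<inter> ((\<lambda>v. {None, Some v}) ` V) = {}" by auto
  show ?thesis unfolding join_K1_edges_def eq
    by (simp add: card_Un_disjoint disj E V card_image i1 i2)
qed

lemma deg_join:
  assumes "simple_graph V E" "v \<in> V"
  shows "degree (join_K1_edges V E) (Some v) = degree E v + 1"
proof -
  have E: "finite E" using fin_E[OF assms(1)] by simp
  have eq: "{e \<in> join_K1_edges V E. Some v \<in> e} = insert {None, Some v} ((\<lambda>e. Some ` e) ` {e \<in> E. v \<in> e})"
    using assms(2) by (auto simp: join_K1_edges_def doubleton_eq_iff)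
  have i1: "inj_on (\<lambda>e. Some ` e) {e \<in> E. v \<in> e}" by (simp add: inj_on_def inj_image_eq_iff)
  have "{None, Some v} \<notin> (\<lambda>e. Some ` e) ` {e \<in> E. v \<in> e}" by auto
  then show ?thesis unfolding degree_def eq using E i1
    by (simp add: card_image)
qed

lemma edge_even:
  assumes "simple_graph V E" "e \<in> E" "inj_on \<phi> V"
  shows "even (edge_label \<phi> e + sum \<phi> e)"
proof -
  obtain u v where uv: "u \<in> V" "v \<in> V" "u \<noteq> v" "e = {u, v}"
    using assms(1,2) unfolding simple_graph_def by blast
  have "inj_on \<phi> {u,v}" using assms(3) uv inj_on_subset[of \<phi> V "{u,v}"] by simp
  then have "edge_label \<phi> e = \<bar>\<phi> u - \<phi> v\<bar>" using edge_label_pair uv by metis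
  moreover have "sum \<phi> e = \<phi> u + \<phi> v" using uv by simp
  ultimately have "edge_label \<phi> e + sum \<phi> e = 2 * max (\<phi> u) (\<phi> v)" by auto
  then show ?thesis by simp
qed

lemma double_count:
  assumes "simple_graph V E"
  shows "(\<Sum>e\<in>E. sum \<phi> e) = (\<Sum>v\<in>V. of_nat (degree E v) * (\<phi> v :: int))"
proof -
  have V: "finite V" using assms by (simp add: simple_graph_def)
  have E: "finite E" using fin_E[OF assms] by simp
  have "(\<Sum>e\<in>E. sum \<phi> e) = (\<Sum>e\<in>E. \<Sum>v\<in>V. if v \<in> e then \<phi> v else 0)"
  proof (rule sum.cong[OF refl])
    fix e assume "e \<in> E"
    then have "e \<subseteq> V" using fin_E[OF assms] by blast
    then have "V \<inter> e = e" by blast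
    then show "sum \<phi> e = (\<Sum>v\<in>V. if v \<in> e then \<phi> v else 0)"
      using sum.inter_restrict[OF V, of \<phi> e] by (simp add: Int_commute)
  qed
  also have "\<dots> = (\<Sum>v\<in>V. \<Sum>e\<in>E. if v \<in> e then \<phi> v else 0)" by (rule sum.swap)
  also have "\<dots> = (\<Sum>v\<in>V. of_nat (degree E v) * \<phi> v)"
  proof (rule sum.cong[OF refl])
    fix v
    have "(\<Sum>e\<in>E. if v \<in> e then \<phi> v else 0) = (\<Sum>e\<in>{e\<in>E. v \<in> e}. \<phi> v)"
      using sum.inter_filter[OF E, of "\<lambda>_. \<phi> v" "\<lambda>e. v \<in> e"] by simp
    then show "(\<Sum>e\<in>E. if v \<in> e then \<phi> v else 0) = of_nat (degree E v) * \<phi> v"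
      by (simp add: degree_def)
  qed
  finally show ?thesis .
qed

lemma tri_odd:
  fixes N :: nat
  assumes "N mod 4 = 1 \<or> N mod 4 = 2"
  shows "odd (int N * (int N + 1) div 2)"
proof -
  have "N = 4*(N div 4) + N mod 4" by simp
  then have k: "N = 4*(N div 4)+1 \<or> N = 4*(N div 4)+2" using assms by metis
  define k where "k = N div 4"
  from k[folded k_def] show ?thesis
  proof
    assume "N = 4*k+1"
    then have "int N * (int N + 1) div 2 = (4*int k+1)*(2*int k+1)" by (simp add: algebra_simps)
    then show ?thesis by simp
  next
    assume "N = 4*k+2"
    then have "int N * (int N + 1) div 2 = (2*int k+1)*(4*int k+3)" by (simp add: algebra_simps)
    then show ?thesis by simp
  qed
qed

lemma sum_upto: "(\<Sum>i\<in>{1..int n}. i) = int n * (int n + 1) div 2"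
proof (induction n)
  case 0 then show ?case by simp
next
  case (Suc n)
  have "{1..int (Suc n)} = insert (int n + 1) {1..int n}" by auto
  then have "(\<Sum>i\<in>{1..int (Suc n)}. i) = (int n + 1) + (\<Sum>i\<in>{1..int n}. i)" by simp
  also have "\<dots> = (int n + 1) + int n * (int n + 1) div 2" using Suc by simp
  also have "\<dots> = int (Suc n) * (int (Suc n) + 1) div 2"
  proof -
    have "even (int n * (int n + 1))" by simp
    then obtain m where "int n * (int n + 1) = 2*m" by blast
    moreover have "int (Suc n) * (int (Suc n) + 1) = int n * (int n + 1) + 2*(int n + 1)"
      by (simp add: algebra_simps)
    ultimately show ?thesis by simp
  qed
  finally show ?case .
qed

theorem corollary7p4:
  fixes V :: "'a set" and E :: "'a set set"
  assumes "simple_graph V E"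
    and "eulerian (join_K1_nodes V) (join_K1_edges V E)"
    and "card (join_K1_edges V E) mod 4 = 1 \<or> card (join_K1_edges V E) mod 4 = 2"
  shows "\<not> supergraceful V E"
proof
  assume "supergraceful V E"
  then obtain \<phi> where tl: "total_labeling V E \<phi>" by (auto simp: supergraceful_def)
  have V: "finite V" using assms(1) by (simp add: simple_graph_def)
  have E: "finite E" using fin_E[OF assms(1)] by simp
  have inj: "inj_on \<phi> V" and inj2: "inj_on (edge_label \<phi>) E"
    and dj: "\<phi> ` V \<inter> edge_label \<phi> ` E = {}"
    and un: "\<phi> ` V \<union> edge_label \<phi> ` E = {1 .. int (card V + card E)}"
    using tl by (auto simp: total_labeling_def)
  define N where "N = card V + card E"
  have Nmod: "N mod 4 = 1 \<or> N mod 4 = 2" using assms(3) card_join[OF assms(1)] by (simp add: N_def add.commute)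
  have degodd: "odd (degree E v)" if "v \<in> V" for v
  proof -
    have "Some v \<in> join_K1_nodes V" using that by (simp add: join_K1_nodes_def)
    then have "even (degree (join_K1_edges V E) (Some v))" using assms(2) by (simp add: eulerian_def)
    then show ?thesis using deg_join[OF assms(1) that] by simp
  qed
  have T: "(\<Sum>i\<in>{1..int N}. i) = sum \<phi> V + sum (edge_label \<phi>) E"
  proof -
    have "(\<Sum>i\<in>{1..int N}. i) = (\<Sum>i\<in>\<phi> ` V. i) + (\<Sum>i\<in>edge_label \<phi> ` E. i)"
      unfolding N_def un[symmetric] by (rule sum.union_disjoint) (use V E dj in auto)
    also have "\<dots> = sum \<phi> V + sum (edge_label \<phi>) E"
      using sum.reindex[OF inj, of id] sum.reindex[OF inj2, of id] by simp
    finally show ?thesis .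
  qed
  define D where "D = (\<Sum>e\<in>E. sum \<phi> e)"
  have e1: "even (sum (edge_label \<phi>) E + D)"
    unfolding D_def sum.distrib[symmetric]
    by (rule dvd_sum) (use edge_even[OF assms(1) _ inj] in auto)
  have e2: "even (sum \<phi> V + D)"
  proof -
    have "sum \<phi> V + D = (\<Sum>v\<in>V. (1 + of_nat (degree E v)) * \<phi> v)"
      unfolding D_def double_count[OF assms(1)] by (simp add: sum.distrib algebra_simps)
    also have "even \<dots>"
    proof (rule dvd_sum)
      fix v assume "v \<in> V"
      then have "odd (degree E v)" by (rule degodd)
      then have "even (1 + int (degree E v))" by simp
      then show "even ((1 + of_nat (degree E v)) * \<phi> v)" by simp
    qed
    finally show ?thesis .
  qed
  have "even (sum \<phi> V + sum (edge_label \<phi>) E)"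
  proof -
    have "sum \<phi> V + sum (edge_label \<phi>) E = (sum \<phi> V + D) + (sum (edge_label \<phi>) E + D) - 2 * D" by simp
    then show ?thesis using e1 e2 by simp
  qed
  then have "even (int N * (int N + 1) div 2)" using T sum_upto[of N] by simp
  then show False using tri_odd[OF Nmod] by simp
qed

end
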